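(* Let $D$ and $H$ be finite sets of doctors and hospitals with $|D|\ge 2$, $|H|\ge 2$, and let $P$ be a profile with common preferences. For positive integers $l,k$, the homogeneous arrangement $(l,k)$ is adequate at $P$ if and only if $l=k$ or $l,k\ge\min\{|D|,|H|\}$.
   Context: Each $h\in H$ has a strict preference $P_h$ over $D\cup\{h\}$ and each $d\in D$ a strict preference $P_d$ over $H\cup\{d\}$ (ranking below oneself means unacceptable). $P$ has common preferences if all doctors rank the hospitals identically, all hospitals rank the doctors identically, every hospital is acceptable to every doctor and every doctor is acceptable to every hospital. A matching is $\mu:H\cup D\to H\cup D$ with $\mu(h)\in D\cup\{h\}$, $\mu(d)\in H\cup\{d\}$, $\mu(d)=h$ iff $\mu(h)=d$; it is stable if no pair $(d,h)$ has $h\mathrel{P_d}\mu(d)$ and $d\mathrel{P_h}\mu(h)$. An interview arrangement $(\iota,\kappa)$ gives each hospital an interview capacity $\iota_h\in\mathbb N$ and each doctor $\kappa_d\in\mathbb N$; the homogeneous arrangement $(l,k)$ has $\iota_h=l$ for all $h$ and $\kappa_d=k$ for all $d$. An interview matching is a many-to-many matching $\nu$ ($\nu(d)\subseteq H$, $\nu(h)\subseteq D$, $h\in\nu(d)$ iff $d\in\nu(h)$) respecting the capacities. The $(\iota,\kappa)$-matching at $P$: Step 1, $\nu$ is the hospital-optimal pairwise stable interview matching, computed by hospital-proposing deferred acceptance where each agent chooses from a set of proposals its acceptable partners if at most capacity many, else its capacity-many best; Step 2, the final matching is the outcome of doctor-proposing deferred acceptance with each agent $i$'s preference restricted to $\nu(i)$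 (only interviewed, acceptable agents are acceptable, ranked by $P_i$). The arrangement is adequate at $P$ if the resulting matching is stable with respect to $P$. *)

theory Defs
  imports Main
begin

text \<open>The strict preference of an agent a over the other side
together with a itself is represented by the list of a's acceptable partners,
best first (partners ranked below a itself are exactly those not in the list;
their mutual order is irrelevant for everything below).  Being unmatched is
represented by None.\<close>

definition ranks_above :: "'a list \<Rightarrow> 'a \<Rightarrow> 'a \<Rightarrow> bool" where
  "ranks_above xs a b \<longleftrightarrow> (\<exists>i j. i < j \<and> j < length xs \<and> xs ! i = a \<and> xs ! j = b)"

definition prefers :: "'a list \<Rightarrow> 'a option \<Rightarrow> 'a option \<Rightarrow> bool" where
  "prefers xs x y = (case x of None \<Rightarrow> False
     | Some a \<Rightarrow> a \<in> set xs \<and> (case y of None \<Rightarrow> True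
                               | Some b \<Rightarrow> b \<notin> set xs \<or> ranks_above xs a b))"

definition common_prefs ::
  "'d set \<Rightarrow> 'h set \<Rightarrow> ('d \<Rightarrow> 'h list) \<Rightarrow> ('h \<Rightarrow> 'd list) \<Rightarrow> bool" where
  "common_prefs D H prefD prefH \<longleftrightarrow>
     (\<exists>ld lh. distinct ld \<and> set ld = D \<and> distinct lh \<and> set lh = H \<and>
        (\<forall>h\<in>H. prefH h = ld) \<and> (\<forall>d\<in>D. prefD d = lh))"

definition choose_best :: "'a list \<Rightarrow> nat \<Rightarrow> 'a set \<Rightarrow> 'a set" where
  "choose_best xs n S = set (take n (filter (\<lambda>x. x \<in> S) xs))"

text \<open>Many-to-many deferred acceptance, proposers 'p, receivers 'r.
The state is the set of (proposer, receiver) pairs in which the receiver has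
rejected the proposer so far.\<close>
definition da_proposals ::
  "('p \<Rightarrow> 'r list) \<Rightarrow> ('p \<Rightarrow> nat) \<Rightarrow> ('p \<times> 'r) set \<Rightarrow> 'p \<Rightarrow> 'r set" where
  "da_proposals pp cp Rej p = choose_best (pp p) (cp p) {r. (p, r) \<notin> Rej}"

definition da_held ::
  "'p set \<Rightarrow> ('p \<Rightarrow> 'r list) \<Rightarrow> ('r \<Rightarrow> 'p list) \<Rightarrow> ('p \<Rightarrow> nat) \<Rightarrow> ('r \<Rightarrow> nat)
     \<Rightarrow> ('p \<times> 'r) set \<Rightarrow> 'r \<Rightarrow> 'p set" where
  "da_held P pp pr cp cr Rej r =
     choose_best (pr r) (cr r) {p \<in> P. r \<in> da_proposals pp cp Rej p}"

definition da_step ::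
  "'p set \<Rightarrow> ('p \<Rightarrow> 'r list) \<Rightarrow> ('r \<Rightarrow> 'p list) \<Rightarrow> ('p \<Rightarrow> nat) \<Rightarrow> ('r \<Rightarrow> nat)
     \<Rightarrow> ('p \<times> 'r) set \<Rightarrow> ('p \<times> 'r) set" where
  "da_step P pp pr cp cr Rej = Rej \<union>
     {(p, r). p \<in> P \<and> r \<in> da_proposals pp cp Rej p \<and> p \<notin> da_held P pp pr cp cr Rej r}"

text \<open>Every non-final round adds a new rejected pair (p, r) with r in set (pp p), so
after (sum of list lengths) rounds the procedure has reached its fixpoint.\<close>
definition da_final_rej ::
  "'p set \<Rightarrow> ('p \<Rightarrow> 'r list) \<Rightarrow> ('r \<Rightarrow> 'p list) \<Rightarrow> ('p \<Rightarrow> nat) \<Rightarrow> ('r \<Rightarrow> nat)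
     \<Rightarrow> ('p \<times> 'r) set" where
  "da_final_rej P pp pr cp cr =
     (da_step P pp pr cp cr ^^ (\<Sum>p\<in>P. length (pp p))) {}"

definition deferred_acceptance ::
  "'p set \<Rightarrow> ('p \<Rightarrow> 'r list) \<Rightarrow> ('r \<Rightarrow> 'p list) \<Rightarrow> ('p \<Rightarrow> nat) \<Rightarrow> ('r \<Rightarrow> nat)
     \<Rightarrow> ('p \<times> 'r) set" where
  "deferred_acceptance P pp pr cp cr =
     (let Rej = da_final_rej P pp pr cp cr in
       {(p, r). p \<in> P \<and> r \<in> da_proposals pp cp Rej p \<and> p \<in> da_held P pp pr cp cr Rej r})"

definition interview_matching ::
  "'d set \<Rightarrow> 'h set \<Rightarrow> ('d \<Rightarrow> 'h list) \<Rightarrow> ('h \<Rightarrow> 'd list) \<Rightarrow> ('h \<Rightarrow> nat) \<Rightarrow> ('d \<Rightarrow> nat)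
     \<Rightarrow> ('h \<times> 'd) set" where
  "interview_matching D H prefD prefH iota kappa =
     deferred_acceptance H prefH prefD iota kappa"

definition ik_matching ::
  "'d set \<Rightarrow> 'h set \<Rightarrow> ('d \<Rightarrow> 'h list) \<Rightarrow> ('h \<Rightarrow> 'd list) \<Rightarrow> ('h \<Rightarrow> nat) \<Rightarrow> ('d \<Rightarrow> nat)
     \<Rightarrow> ('d \<times> 'h) set" where
  "ik_matching D H prefD prefH iota kappa =
     (let \<nu> = interview_matching D H prefD prefH iota kappa in
       deferred_acceptance D
         (\<lambda>d. filter (\<lambda>h. (h, d) \<in> \<nu>) (prefD d))
         (\<lambda>h. filter (\<lambda>d. (h, d) \<in> \<nu>) (prefH h))
         (\<lambda>_. 1) (\<lambda>_. 1))"

definition partner_of_d :: "('d \<times> 'h) set \<Rightarrow> 'd \<Rightarrow> 'h option" where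
  "partner_of_d M d = (if \<exists>h. (d, h) \<in> M then Some (SOME h. (d, h) \<in> M) else None)"

definition partner_of_h :: "('d \<times> 'h) set \<Rightarrow> 'h \<Rightarrow> 'd option" where
  "partner_of_h M h = (if \<exists>d. (d, h) \<in> M then Some (SOME d. (d, h) \<in> M) else None)"

definition stable ::
  "'d set \<Rightarrow> 'h set \<Rightarrow> ('d \<Rightarrow> 'h list) \<Rightarrow> ('h \<Rightarrow> 'd list) \<Rightarrow> ('d \<times> 'h) set \<Rightarrow> bool" where
  "stable D H prefD prefH M \<longleftrightarrow>
     (\<forall>d\<in>D. \<forall>h\<in>H. \<not> (prefers (prefD d) (Some h) (partner_of_d M d) \<and>
                       prefers (prefH h) (Some d) (partner_of_h M h)))"

definition adequate ::
  "'d set \<Rightarrow> 'h set \<Rightarrow> ('d \<Rightarrow> 'h list) \<Rightarrow> ('h \<Rightarrow> 'd list) \<Rightarrow> ('h \<Rightarrow> nat) \<Rightarrow> ('d \<Rightarrow> nat) \<Rightarrow> bool" where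
  "adequate D H prefD prefH iota kappa \<longleftrightarrow>
     stable D H prefD prefH (ik_matching D H prefD prefH iota kappa)"

end

theory Submission
  imports Defs
begin

definition posi :: "'a list \<Rightarrow> 'a \<Rightarrow> nat" where
  "posi xs x = length (takeWhile (\<lambda>y. y \<noteq> x) xs)"

lemma posi_Cons: "posi (y # ys) x = (if x = y then 0 else Suc (posi ys x))"
  by (auto simp: posi_def)

lemma posi_less: "x \<in> set xs \<Longrightarrow> posi xs x < length xs"
  by (induction xs) (auto simp: posi_Cons)

lemma nth_posi: "x \<in> set xs \<Longrightarrow> xs ! posi xs x = x"
  by (induction xs) (auto simp: posi_Cons)

lemma posi_nth: "distinct xs \<Longrightarrow> i < length xs \<Longrightarrow> posi xs (xs ! i) = i"
proof (induction xs arbitrary: i)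
  case Nil then show ?case by simp
next
  case (Cons y ys) then show ?case
    by (cases i) (auto simp: posi_Cons)
qed

lemma posi_inj: "x \<in> set xs \<Longrightarrow> y \<in> set xs \<Longrightarrow> posi xs x = posi xs y \<Longrightarrow> x = y"
  by (metis nth_posi)

lemma filter_posi_range:
  "distinct xs \<Longrightarrow> filter (\<lambda>x. a \<le> posi xs x \<and> posi xs x < a + m) xs = take m (drop a xs)"
proof (induction xs arbitrary: a m)
  case Nil then show ?case by simp
next
  case (Cons y ys)
  have eq: "\<And>P. filter (\<lambda>x. P (posi (y # ys) x)) ys = filter (\<lambda>x. P (Suc (posi ys x))) ys"
    using Cons.prems by (intro filter_cong) (auto simp: posi_Cons)
  show ?case
  proof (cases a)
    case 0
    then show ?thesis
    proof (cases m)
      case 0 then show ?thesis using \<open>a = 0\<close> by (simp add: filter_False)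
    next
      case (Suc m')
      have "filter (\<lambda>x. a \<le> posi (y # ys) x \<and> posi (y # ys) x < a + m) ys
          = filter (\<lambda>x. 0 \<le> posi ys x \<and> posi ys x < 0 + m') ys"
        using eq[of "\<lambda>q. a \<le> q \<and> q < a + m"] 0 Suc by simp
      also have "\<dots> = take m' ys" using Cons.IH[of 0 m'] Cons.prems by simp
      finally show ?thesis using 0 Suc by (simp add: posi_Cons)
    qed
  next
    case (Suc a')
    have "filter (\<lambda>x. a \<le> posi (y # ys) x \<and> posi (y # ys) x < a + m) ys
          = filter (\<lambda>x. a' \<le> posi ys x \<and> posi ys x < a' + m) ys"
      using eq[of "\<lambda>q. a \<le> q \<and> q < a + m"] Suc by simp
    also have "\<dots> = take m (drop a' ys)" using Cons by simp
    finally show ?thesis using Suc by (simp add: posi_Cons)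
  qed
qed

lemma set_take_drop_posi:
  "distinct xs \<Longrightarrow> set (take m (drop a xs)) = {x \<in> set xs. a \<le> posi xs x \<and> posi xs x < a + m}"
proof -
  assume d: "distinct xs"
  have "set (take m (drop a xs)) = set (filter (\<lambda>x. a \<le> posi xs x \<and> posi xs x < a + m) xs)"
    by (simp only: filter_posi_range[OF d])
  then show ?thesis by simp
qed

lemma div_eq_iff_range: "0 < (c::nat) \<Longrightarrow> (x div c = q) \<longleftrightarrow> (c * q \<le> x \<and> x < c * q + c)"
  by (metis add.commute div_nat_eqI div_times_less_eq_dividend
    dividend_less_times_div mult.commute mult_Suc_right)

lemma le_div_iff_range: "0 < (c::nat) \<Longrightarrow> (q \<le> x div c) \<longleftrightarrow> (c * q \<le> x)"
  by (simp add: less_eq_div_iff_mult_less_eq mult.commute)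

locale blockDA =
  fixes Lp :: "'p list" and Lr :: "'r list" and gP :: "'p \<Rightarrow> nat" and gR :: "'r \<Rightarrow> nat"
    and pp :: "'p \<Rightarrow> 'r list" and pr :: "'r \<Rightarrow> 'p list" and cp cr :: nat
  assumes dLp: "distinct Lp" and dLr: "distinct Lr"
    and pp_eq: "\<And>p. p \<in> set Lp \<Longrightarrow> pp p = filter (\<lambda>r. gR r = gP p) Lr"
    and pr_eq: "\<And>r. r \<in> set Lr \<Longrightarrow> pr r = filter (\<lambda>p. gP p = gR r) Lp"
    and cp1: "cp \<ge> 1" and cr1: "cr \<ge> 1"
begin

definition posP where "posP p = posi (filter (\<lambda>x. gP x = gP p) Lp) p"
definition posR where "posR r = posi (filter (\<lambda>x. gR x = gR r) Lr) r"

lemma posP_alt: "posP p = posi (filter (\<lambda>x. gP x = gP p) Lp) p" by (simp add: posP_def)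
lemma posR_alt: "posR r = posi (filter (\<lambda>x. gR x = gR r) Lr) r" by (simp add: posR_def)

definition RejT :: "nat \<Rightarrow> ('p \<times> 'r) set" where
  "RejT t = {(p, r). p \<in> set Lp \<and> r \<in> set Lr \<and> gR r = gP p \<and>
      posR r div cp < t \<and> posR r div cp < posP p div cr}"

lemma props:
  assumes p: "p \<in> set Lp"
  shows "da_proposals pp (\<lambda>_. cp) (RejT t) p =
    {r \<in> set Lr. gR r = gP p \<and> posR r div cp = min t (posP p div cr)}"
proof -
  define fl where "fl = filter (\<lambda>r. gR r = gP p) Lr"
  define c where "c = min t (posP p div cr)"
  have dfl: "distinct fl" using dLr by (simp add: fl_def)
  have posfl: "posR r = posi fl r" if "r \<in> set fl" for r
    using that by (simp add: posR_def fl_def)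
  have "filter (\<lambda>r. r \<in> {r. (p, r) \<notin> RejT t}) fl
      = filter (\<lambda>r. cp * c \<le> posi fl r \<and> posi fl r < cp * c + length fl) fl"
  proof (intro filter_cong refl)
    fix r assume r: "r \<in> set fl"
    have "posi fl r < length fl" using r posi_less by metis
    moreover have "(p, r) \<notin> RejT t \<longleftrightarrow> c \<le> posi fl r div cp"
      using r p posfl[OF r] by (auto simp: RejT_def fl_def c_def)
    ultimately show "(r \<in> {r. (p, r) \<notin> RejT t}) =
        (cp * c \<le> posi fl r \<and> posi fl r < cp * c + length fl)"
      using le_div_iff_range[of cp c "posi fl r"] cp1 by auto
  qed
  also have "\<dots> = drop (cp * c) fl" using filter_posi_range[OF dfl] by simp
  finally have "da_proposals pp (\<lambda>_. cp) (RejT t) p = set (take cp (drop (cp * c) fl))"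
    by (simp add: da_proposals_def choose_best_def pp_eq[OF p] fl_def)
  also have "\<dots> = {r \<in> set fl. cp * c \<le> posi fl r \<and> posi fl r < cp * c + cp}"
    using set_take_drop_posi[OF dfl] by simp
  also have "\<dots> = {r \<in> set fl. posi fl r div cp = c}"
    using div_eq_iff_range[of cp] cp1 by auto
  also have "\<dots> = {r \<in> set Lr. gR r = gP p \<and> posR r div cp = c}"
    using posfl by (auto simp: fl_def)
  finally show ?thesis by (simp add: c_def)
qed

lemma held:
  assumes r: "r \<in> set Lr"
  shows "da_held (set Lp) pp pr (\<lambda>_. cp) (\<lambda>_. cr) (RejT t) r =
    {p \<in> set Lp. gP p = gR r \<and> posP p div cr = posR r div cp \<and> posR r div cp \<le> t}"
proof -
  define fl where "fl = filter (\<lambda>p. gP p = gR r) Lp"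
  define c where "c = posR r div cp"
  have dfl: "distinct fl" using dLp by (simp add: fl_def)
  have posfl: "posP p = posi fl p" if "p \<in> set fl" for p
    using that by (simp add: posP_def fl_def)
  have S: "{p \<in> set Lp. r \<in> da_proposals pp (\<lambda>_. cp) (RejT t) p} =
      {p \<in> set Lp. gR r = gP p \<and> c = min t (posP p div cr)}"
    using props r by (auto simp: c_def)
  have F: "filter (\<lambda>p. p \<in> {p \<in> set Lp. r \<in> da_proposals pp (\<lambda>_. cp) (RejT t) p}) fl
      = filter (\<lambda>p. c = min t (posi fl p div cr)) fl"
    unfolding S by (intro filter_cong refl) (auto simp: fl_def posfl)
  have H: "da_held (set Lp) pp pr (\<lambda>_. cp) (\<lambda>_. cr) (RejT t) r =
      set (take cr (filter (\<lambda>p. c = min t (posi fl p div cr)) fl))"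
    using F by (simp add: da_held_def choose_best_def pr_eq[OF r] fl_def)
  have goal_set: "{p \<in> set Lp. gP p = gR r \<and> posP p div cr = c} = {p \<in> set fl. posi fl p div cr = c}"
    using posfl by (auto simp: fl_def)
  have std: "set (take cr (drop (cr * c) fl)) = {p \<in> set fl. posi fl p div cr = c}"
    using set_take_drop_posi[OF dfl] div_eq_iff_range[of cr] cr1 by auto
  consider "c < t" | "c = t" | "t < c" by linarith
  then show ?thesis
  proof cases
    case 1
    have "filter (\<lambda>p. c = min t (posi fl p div cr)) fl
        = filter (\<lambda>p. cr * c \<le> posi fl p \<and> posi fl p < cr * c + cr) fl"
    proof (intro filter_cong refl)
      fix p
      have "c = min t (posi fl p div cr) \<longleftrightarrow> posi fl p div cr = c" using 1 by auto
      then show "(c = min t (posi fl p div cr)) = (cr * c \<le> posi fl p \<and> posi fl p < cr * c + cr)"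
        using div_eq_iff_range[of cr "posi fl p" c] cr1 by auto
    qed
    also have "\<dots> = take cr (drop (cr * c) fl)" by (rule filter_posi_range[OF dfl])
    finally show ?thesis using H std goal_set 1 by (simp add: c_def)
  next
    case 2
    have "filter (\<lambda>p. c = min t (posi fl p div cr)) fl
        = filter (\<lambda>p. cr * c \<le> posi fl p \<and> posi fl p < cr * c + length fl) fl"
    proof (intro filter_cong refl)
      fix p assume p: "p \<in> set fl"
      have "posi fl p < length fl" using p posi_less by metis
      moreover have "c = min t (posi fl p div cr) \<longleftrightarrow> c \<le> posi fl p div cr" using 2 by auto
      ultimately show "(c = min t (posi fl p div cr)) = (cr * c \<le> posi fl p \<and> posi fl p < cr * c + length fl)"
        using le_div_iff_range[of cr c "posi fl p"] cr1 by auto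
    qed
    also have "\<dots> = drop (cr * c) fl" using filter_posi_range[OF dfl] by simp
    finally show ?thesis using H std goal_set 2 by (simp add: c_def)
  next
    case 3
    have "filter (\<lambda>p. c = min t (posi fl p div cr)) fl = []"
      using 3 by (auto simp: filter_empty_conv)
    then show ?thesis using H 3 by (auto simp: c_def)
  qed
qed

lemma step: "da_step (set Lp) pp pr (\<lambda>_. cp) (\<lambda>_. cr) (RejT t) = RejT (Suc t)"
proof -
  have "(p, r) \<in> da_step (set Lp) pp pr (\<lambda>_. cp) (\<lambda>_. cr) (RejT t) \<longleftrightarrow> (p, r) \<in> RejT (Suc t)" for p r
  proof (cases "p \<in> set Lp \<and> r \<in> set Lr \<and> gR r = gP p")
    case True
    then have p: "p \<in> set Lp" and r: "r \<in> set Lr" by auto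
    define c where "c = posR r div cp"
    define b where "b = posP p div cr"
    have A: "(p, r) \<in> RejT t \<longleftrightarrow> c < t \<and> c < b" using True by (simp add: RejT_def c_def b_def)
    have B: "(p, r) \<in> RejT (Suc t) \<longleftrightarrow> c < Suc t \<and> c < b" using True by (simp add: RejT_def c_def b_def)
    have C: "r \<in> da_proposals pp (\<lambda>_. cp) (RejT t) p \<longleftrightarrow> c = min t b"
      using True props[OF p, of t] by (simp add: c_def b_def)
    have D: "p \<in> da_held (set Lp) pp pr (\<lambda>_. cp) (\<lambda>_. cr) (RejT t) r \<longleftrightarrow> b = c \<and> c \<le> t"
      using True held[OF r, of t] by (simp add: c_def b_def)
    have E: "(p, r) \<in> da_step (set Lp) pp pr (\<lambda>_. cp) (\<lambda>_. cr) (RejT t) \<longleftrightarrow>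
        (p, r) \<in> RejT t \<or> (r \<in> da_proposals pp (\<lambda>_. cp) (RejT t) p \<and>
           p \<notin> da_held (set Lp) pp pr (\<lambda>_. cp) (\<lambda>_. cr) (RejT t) r)"
      using p by (simp add: da_step_def)
    have ar: "(c < t \<and> c < b \<or> (c = min t b \<and> \<not> (b = c \<and> c \<le> t))) \<longleftrightarrow> (c < Suc t \<and> c < b)"
      by (cases "t \<le> b") (auto simp: min_def)
    show ?thesis using A B C D E ar by blast
  next
    case False
    then show ?thesis
      unfolding da_step_def using props[of p t]
      by (auto simp: RejT_def)
  qed
  then show ?thesis by auto
qed

lemma iter: "(da_step (set Lp) pp pr (\<lambda>_. cp) (\<lambda>_. cr) ^^ t) {} = RejT t"
proof (induction t)
  case 0 then show ?case by (simp add: RejT_def)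
next
  case (Suc t) then show ?case by (simp add: step)
qed

lemma final:
  "deferred_acceptance (set Lp) pp pr (\<lambda>_. cp) (\<lambda>_. cr) =
    {(p, r). p \<in> set Lp \<and> r \<in> set Lr \<and> gR r = gP p \<and> posR r div cp = posP p div cr}"
proof -
  define N where "N = (\<Sum>p\<in>set Lp. length (pp p))"
  have rej: "da_final_rej (set Lp) pp pr (\<lambda>_. cp) (\<lambda>_. cr) = RejT N"
    by (simp add: da_final_rej_def iter N_def)
  have bound: "posR r div cp \<le> N" if "p \<in> set Lp" "r \<in> set Lr" "gR r = gP p" for p r
  proof -
    have rin: "r \<in> set (pp p)" using that pp_eq by auto
    have "posR r = posi (pp p) r" using that pp_eq by (simp add: posR_def)
    then have "posR r < length (pp p)" using rin posi_less by metis
    moreover have "length (pp p) \<le> N" unfolding N_def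
      by (rule member_le_sum) (use that in auto)
    ultimately show ?thesis by (meson div_le_dividend le_trans less_imp_le)
  qed
  have "(p, r) \<in> deferred_acceptance (set Lp) pp pr (\<lambda>_. cp) (\<lambda>_. cr) \<longleftrightarrow>
     p \<in> set Lp \<and> r \<in> set Lr \<and> gR r = gP p \<and> posR r div cp = posP p div cr" for p r
  proof (cases "p \<in> set Lp \<and> r \<in> set Lr \<and> gR r = gP p")
    case True
    then have p: "p \<in> set Lp" and r: "r \<in> set Lr" by auto
    define c where "c = posR r div cp"
    define b where "b = posP p div cr"
    have C: "r \<in> da_proposals pp (\<lambda>_. cp) (RejT N) p \<longleftrightarrow> c = min N b"
      using True props[OF p, of N] by (simp add: c_def b_def)
    have D: "p \<in> da_held (set Lp) pp pr (\<lambda>_. cp) (\<lambda>_. cr) (RejT N) r \<longleftrightarrow> b = c \<and> c \<le> N"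
      using True held[OF r, of N] by (simp add: c_def b_def)
    have cN: "c \<le> N" using bound[of p r] True by (simp add: c_def)
    have E: "(p, r) \<in> deferred_acceptance (set Lp) pp pr (\<lambda>_. cp) (\<lambda>_. cr) \<longleftrightarrow>
        r \<in> da_proposals pp (\<lambda>_. cp) (RejT N) p \<and> p \<in> da_held (set Lp) pp pr (\<lambda>_. cp) (\<lambda>_. cr) (RejT N) r"
      using p unfolding deferred_acceptance_def Let_def rej by simp
    have ar: "(c = min N b \<and> b = c \<and> c \<le> N) \<longleftrightarrow> c = b" using cN by (auto simp: min_def)
    show ?thesis using C D E ar True by (auto simp: c_def b_def)
  next
    case False
    then show ?thesis
      unfolding deferred_acceptance_def Let_def rej using props[of p N]
      by auto
  qed
  then show ?thesis by auto
qed

end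

lemma ranks_above_posi:
  assumes "distinct xs" "a \<in> set xs" "b \<in> set xs"
  shows "ranks_above xs a b \<longleftrightarrow> posi xs a < posi xs b"
proof
  assume "ranks_above xs a b"
  then obtain i j where ij: "i < j" "j < length xs" "xs ! i = a" "xs ! j = b"
    by (auto simp: ranks_above_def)
  have "posi xs a = i" using posi_nth[OF assms(1), of i] ij by simp
  moreover have "posi xs b = j" using posi_nth[OF assms(1), of j] ij by simp
  ultimately show "posi xs a < posi xs b" using ij by simp
next
  assume "posi xs a < posi xs b"
  then show "ranks_above xs a b" unfolding ranks_above_def
    by (intro exI[of _ "posi xs a"] exI[of _ "posi xs b"])
       (simp add: posi_less[OF assms(3)] nth_posi[OF assms(2)] nth_posi[OF assms(3)])
qed

lemma posi_block:
  assumes d: "distinct xs" and y: "y \<in> set xs" and l: "0 < l"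
  shows "posi (filter (\<lambda>x. posi xs x div l = posi xs y div l) xs) y = posi xs y mod l"
proof -
  define q where "q = posi xs y div l"
  define i where "i = posi xs y"
  have "filter (\<lambda>x. posi xs x div l = q) xs = filter (\<lambda>x. l * q \<le> posi xs x \<and> posi xs x < l * q + l) xs"
    using div_eq_iff_range[OF l] by simp
  also have "\<dots> = take l (drop (l * q) xs)" by (rule filter_posi_range[OF d])
  finally have F: "filter (\<lambda>x. posi xs x div l = q) xs = take l (drop (l * q) xs)" .
  have il: "i < length xs" using posi_less[OF y] by (simp add: i_def)
  have lo: "l * q \<le> i" "i < l * q + l" using div_eq_iff_range[OF l, of i q] by (auto simp: q_def i_def)
  define j where "j = i - l * q"
  have jl: "j < length (take l (drop (l * q) xs))" using il lo unfolding j_def length_take length_drop by linarith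
  have "take l (drop (l * q) xs) ! j = xs ! i" using lo il jl by (simp add: j_def)
  also have "\<dots> = y" using nth_posi[OF y] by (simp add: i_def)
  finally have "posi (take l (drop (l * q) xs)) y = j"
    using posi_nth[of "take l (drop (l * q) xs)" j] jl d by (metis distinct_drop distinct_take)
  moreover have "j = i mod l" by (simp add: j_def q_def i_def minus_div_mult_eq_mod[symmetric] mult.commute)
  ultimately show ?thesis using F by (simp add: q_def i_def)
qed

lemma stable_char:
  fixes D :: "'d set" and H :: "'h set" and R :: "nat \<Rightarrow> nat \<Rightarrow> bool"
  assumes dld: "distinct ld" and sld: "set ld = D" and dlh: "distinct lh" and slh: "set lh = H"
    and pD: "\<forall>d\<in>D. prefD d = lh" and pH: "\<forall>h\<in>H. prefH h = ld"
    and M: "M = {(d, h). d \<in> D \<and> h \<in> H \<and> R (posi ld d) (posi lh h)}"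
    and f1: "\<And>i j j'. R i j \<Longrightarrow> R i j' \<Longrightarrow> j = j'"
    and f2: "\<And>i i' j. R i j \<Longrightarrow> R i' j \<Longrightarrow> i = i'"
  shows "stable D H prefD prefH M \<longleftrightarrow>
    (\<forall>i<length ld. \<forall>j<length lh. \<not> ((\<forall>j'<length lh. R i j' \<longrightarrow> j < j') \<and>
                                      (\<forall>i'<length ld. R i' j \<longrightarrow> i < i')))"
proof -
  have pd: "prefers (prefD d) (Some h) (partner_of_d M d) \<longleftrightarrow>
      (\<forall>j'<length lh. R (posi ld d) j' \<longrightarrow> posi lh h < j')" if d: "d \<in> D" and h: "h \<in> H" for d h
  proof (cases "\<exists>h'. (d, h') \<in> M")
    case True
    define h0 where "h0 = (SOME h'. (d, h') \<in> M)"
    have h0M: "(d, h0) \<in> M" using True someI_ex by (metis h0_def)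
    then have h0: "h0 \<in> H" "R (posi ld d) (posi lh h0)" using M by auto
    have part: "partner_of_d M d = Some h0" using True by (simp add: partner_of_d_def h0_def)
    have inl: "h \<in> set lh" "h0 \<in> set lh" using h h0 slh by auto
    have "prefers (prefD d) (Some h) (partner_of_d M d) \<longleftrightarrow> posi lh h < posi lh h0"
      using inl by (simp add: prefers_def part pD d ranks_above_posi[OF dlh])
    also have "\<dots> \<longleftrightarrow> (\<forall>j'<length lh. R (posi ld d) j' \<longrightarrow> posi lh h < j')"
    proof
      assume a: "posi lh h < posi lh h0"
      show "\<forall>j'<length lh. R (posi ld d) j' \<longrightarrow> posi lh h < j'"
      proof (intro allI impI)
        fix j' assume "R (posi ld d) j'"
        then have "j' = posi lh h0" using f1 h0(2) by blast
        then show "posi lh h < j'" using a by simp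
      qed
    next
      assume "\<forall>j'<length lh. R (posi ld d) j' \<longrightarrow> posi lh h < j'"
      then show "posi lh h < posi lh h0" using h0(2) posi_less[OF inl(2)] by blast
    qed
    finally show ?thesis .
  next
    case False
    have part: "partner_of_d M d = None" using False by (simp add: partner_of_d_def)
    have "\<forall>j'<length lh. \<not> R (posi ld d) j'"
    proof (intro allI impI notI)
      fix j' assume j': "j' < length lh" and R: "R (posi ld d) j'"
      have "lh ! j' \<in> H" using j' slh by auto
      moreover have "posi lh (lh ! j') = j'" using posi_nth[OF dlh j'] .
      ultimately have "(d, lh ! j') \<in> M" using M d R by auto
      then show False using False by blast
    qed
    moreover have "h \<in> set lh" using h slh by auto
    ultimately show ?thesis by (simp add: part pD d prefers_def)
  qed
  have ph: "prefers (prefH h) (Some d) (partner_of_h M h) \<longleftrightarrow>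
      (\<forall>i'<length ld. R i' (posi lh h) \<longrightarrow> posi ld d < i')" if d: "d \<in> D" and h: "h \<in> H" for d h
  proof (cases "\<exists>d'. (d', h) \<in> M")
    case True
    define d0 where "d0 = (SOME d'. (d', h) \<in> M)"
    have d0M: "(d0, h) \<in> M" using True someI_ex by (metis d0_def)
    then have d0: "d0 \<in> D" "R (posi ld d0) (posi lh h)" using M by auto
    have part: "partner_of_h M h = Some d0" using True by (simp add: partner_of_h_def d0_def)
    have inl: "d \<in> set ld" "d0 \<in> set ld" using d d0 sld by auto
    have "prefers (prefH h) (Some d) (partner_of_h M h) \<longleftrightarrow> posi ld d < posi ld d0"
      using inl by (simp add: prefers_def part pH h ranks_above_posi[OF dld])
    also have "\<dots> \<longleftrightarrow> (\<forall>i'<length ld. R i' (posi lh h) \<longrightarrow> posi ld d < i')"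
    proof
      assume a: "posi ld d < posi ld d0"
      show "\<forall>i'<length ld. R i' (posi lh h) \<longrightarrow> posi ld d < i'"
      proof (intro allI impI)
        fix i' assume "R i' (posi lh h)"
        then have "i' = posi ld d0" using f2 d0(2) by blast
        then show "posi ld d < i'" using a by simp
      qed
    next
      assume "\<forall>i'<length ld. R i' (posi lh h) \<longrightarrow> posi ld d < i'"
      then show "posi ld d < posi ld d0" using d0(2) posi_less[OF inl(2)] by blast
    qed
    finally show ?thesis .
  next
    case False
    have part: "partner_of_h M h = None" using False by (simp add: partner_of_h_def)
    have "\<forall>i'<length ld. \<not> R i' (posi lh h)"
    proof (intro allI impI notI)
      fix i' assume i': "i' < length ld" and R: "R i' (posi lh h)"
      have "ld ! i' \<in> D" using i' sld by auto
      moreover have "posi ld (ld ! i') = i'" using posi_nth[OF dld i'] .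
      ultimately have "(ld ! i', h) \<in> M" using M h R by auto
      then show False using False by blast
    qed
    moreover have "d \<in> set ld" using d sld by auto
    ultimately show ?thesis by (simp add: part pH h prefers_def)
  qed
  define \<Phi> where "\<Phi> i j \<longleftrightarrow> \<not> ((\<forall>j'<length lh. R i j' \<longrightarrow> j < j') \<and> (\<forall>i'<length ld. R i' j \<longrightarrow> i < i'))" for i j
  have "stable D H prefD prefH M \<longleftrightarrow> (\<forall>d\<in>D. \<forall>h\<in>H. \<Phi> (posi ld d) (posi lh h))"
    unfolding stable_def \<Phi>_def using pd ph by simp
  also have "\<dots> \<longleftrightarrow> (\<forall>i<length ld. \<forall>j<length lh. \<Phi> i j)"
  proof
    assume A: "\<forall>d\<in>D. \<forall>h\<in>H. \<Phi> (posi ld d) (posi lh h)"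
    show "\<forall>i<length ld. \<forall>j<length lh. \<Phi> i j"
    proof (intro allI impI)
      fix i j assume i: "i < length ld" and j: "j < length lh"
      have "\<Phi> (posi ld (ld ! i)) (posi lh (lh ! j))" using A i j sld slh by auto
      then show "\<Phi> i j" using posi_nth[OF dld i] posi_nth[OF dlh j] by simp
    qed
  next
    assume "\<forall>i<length ld. \<forall>j<length lh. \<Phi> i j"
    then show "\<forall>d\<in>D. \<forall>h\<in>H. \<Phi> (posi ld d) (posi lh h)"
      using posi_less[of _ ld] posi_less[of _ lh] sld slh by auto
  qed
  finally show ?thesis unfolding \<Phi>_def .
qed

lemma arith_char:
  fixes l k n m :: nat
  assumes l: "l \<ge> 1" and k: "k \<ge> 1"
  defines "R \<equiv> \<lambda>i j. j div k = i div l \<and> j mod k = i mod l"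
  shows "(\<forall>i<n. \<forall>j<m. \<not> ((\<forall>j'<m. R i j' \<longrightarrow> j < j') \<and> (\<forall>i'<n. R i' j \<longrightarrow> i < i')))
     \<longleftrightarrow> (l = k \<or> (min n m \<le> l \<and> min n m \<le> k))"
proof
  assume A: "\<forall>i<n. \<forall>j<m. \<not> ((\<forall>j'<m. R i j' \<longrightarrow> j < j') \<and> (\<forall>i'<n. R i' j \<longrightarrow> i < i'))"
  show "l = k \<or> (min n m \<le> l \<and> min n m \<le> k)"
  proof (rule ccontr)
    assume B: "\<not> (l = k \<or> (min n m \<le> l \<and> min n m \<le> k))"
    then consider "l < k" "l < min n m" | "k < l" "k < min n m" by linarith
    then show False
    proof cases
      case 1
      have "\<forall>j'<m. R l j' \<longrightarrow> l < j'"
      proof (intro allI impI)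
        fix j' assume "R l j'"
        then have "j' div k = 1" using l by (simp add: R_def)
        then have "k \<le> j'" using k by (metis div_less less_irrefl_nat not_le zero_neq_one)
        then show "l < j'" using 1 by simp
      qed
      moreover have "\<forall>i'<n. R i' l \<longrightarrow> l < i'"
      proof (intro allI impI)
        fix i' assume "R i' l"
        then have "i' div l = 0" "i' mod l = l" using 1 by (auto simp: R_def)
        then have False using l by (metis mod_less_divisor not_less_iff_gr_or_eq zero_less_one less_le_trans)
        then show "l < i'" ..
      qed
      ultimately show False using A[rule_format, of l l] 1 by auto
    next
      case 2
      have "\<forall>i'<n. R i' k \<longrightarrow> k < i'"
      proof (intro allI impI)
        fix i' assume "R i' k"
        then have "i' div l = 1" using k by (simp add: R_def)
        then have "l \<le> i'" using l by (metis div_less less_irrefl_nat not_le zero_neq_one)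
        then show "k < i'" using 2 by simp
      qed
      moreover have "\<forall>j'<m. R k j' \<longrightarrow> k < j'"
      proof (intro allI impI)
        fix j' assume "R k j'"
        then have "j' div k = 0" "j' mod k = k" using 2 by (auto simp: R_def)
        then have False using k by (metis mod_less_divisor not_less_iff_gr_or_eq zero_less_one less_le_trans)
        then show "k < j'" ..
      qed
      ultimately show False using A[rule_format, of k k] 2 by auto
    qed
  qed
next
  assume C: "l = k \<or> (min n m \<le> l \<and> min n m \<le> k)"
  show "\<forall>i<n. \<forall>j<m. \<not> ((\<forall>j'<m. R i j' \<longrightarrow> j < j') \<and> (\<forall>i'<n. R i' j \<longrightarrow> i < i'))"
  proof (intro allI impI notI)
    fix i j assume i: "i < n" and j: "j < m"
      and H: "(\<forall>j'<m. R i j' \<longrightarrow> j < j') \<and> (\<forall>i'<n. R i' j \<longrightarrow> i < i')"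
    show False
    proof (cases "l = k")
      case True
      have Rx: "R x x" for x using True by (simp add: R_def)
      show False
      proof (cases "i < m")
        case True
        then have "j < i" using H Rx by blast
        then have "i < j" using H Rx i by (meson less_trans)
        then show False using \<open>j < i\<close> by simp
      next
        case False
        then have "j < n" using i j by simp
        then have "i < j" using H Rx by blast
        then show False using False j by simp
      qed
    next
      case False
      then have lk: "min n m \<le> l" "min n m \<le> k" using C by auto
      have Rx: "R x x" if "x < min n m" for x
      proof -
        have "x < l" "x < k" using that lk by linarith+
        then show ?thesis by (simp add: R_def)
      qed
      show False
      proof (cases "i < m")
        case True
        then have "j < i" using H Rx i by (metis min_less_iff_conj)
        then have "i < j" using H Rx i j by (metis min_less_iff_conj less_trans)
        then show False using \<open>j < i\<close> by simp
      next
        case False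
        then have "j < n" "j < min n m" using i j by auto
        then have "i < j" using H Rx by blast
        then show False using False j by simp
      qed
    qed
  qed
qed

theorem proposition2:
  fixes D :: "'d set" and H :: "'h set"
    and prefD :: "'d \<Rightarrow> 'h list" and prefH :: "'h \<Rightarrow> 'd list"
    and l k :: nat
  assumes "finite D" and "finite H"
    and "card D \<ge> 2" and "card H \<ge> 2"
    and "common_prefs D H prefD prefH"
    and "l \<ge> 1" and "k \<ge> 1"
  shows "adequate D H prefD prefH (\<lambda>_. l) (\<lambda>_. k) \<longleftrightarrow>
           (l = k \<or> (l \<ge> min (card D) (card H) \<and> k \<ge> min (card D) (card H)))"
proof -
  obtain ld lh where dld: "distinct ld" and sld: "set ld = D" and dlh: "distinct lh" and slh: "set lh = H"
    and pH: "\<forall>h\<in>H. prefH h = ld" and pD: "\<forall>d\<in>D. prefD d = lh"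
    using assms(5) unfolding common_prefs_def by blast
  have l0: "0 < l" and k0: "0 < k" using assms(6,7) by auto
  interpret s1: blockDA lh ld "\<lambda>_. 0" "\<lambda>_. 0" prefH prefD l k
    by unfold_locales (use dld dlh pH pD sld slh assms(6,7) in auto)
  define \<nu> where "\<nu> = interview_matching D H prefD prefH (\<lambda>_. l) (\<lambda>_. k)"
  have nu: "\<nu> = {(h, d). h \<in> H \<and> d \<in> D \<and> posi ld d div l = posi lh h div k}"
    unfolding \<nu>_def interview_matching_def using s1.final slh sld
    by (simp add: s1.posR_alt s1.posP_alt)
  define gD where "gD = (\<lambda>d. posi ld d div l)"
  define gH where "gH = (\<lambda>h. posi lh h div k)"
  define ppd where "ppd = (\<lambda>d. filter (\<lambda>h. (h, d) \<in> \<nu>) (prefD d))"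
  define prh where "prh = (\<lambda>h. filter (\<lambda>d. (h, d) \<in> \<nu>) (prefH h))"
  interpret s2: blockDA ld lh gD gH ppd prh 1 1
  proof unfold_locales
    fix d assume d: "d \<in> set ld"
    show "ppd d = filter (\<lambda>r. gH r = gD d) lh"
      unfolding ppd_def using d pD sld slh
      by (auto intro!: filter_cong simp: nu gD_def gH_def)
  next
    fix h assume h: "h \<in> set lh"
    show "prh h = filter (\<lambda>p. gD p = gH h) ld"
      unfolding prh_def using h pH sld slh
      by (auto intro!: filter_cong simp: nu gD_def gH_def)
  qed (use dld dlh in auto)
  define R where "R = (\<lambda>i j. j div k = i div l \<and> j mod k = i mod l)"
  have M: "ik_matching D H prefD prefH (\<lambda>_. l) (\<lambda>_. k) =
      {(d, h). d \<in> D \<and> h \<in> H \<and> R (posi ld d) (posi lh h)}"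
  proof -
    have "ik_matching D H prefD prefH (\<lambda>_. l) (\<lambda>_. k) = deferred_acceptance (set ld) ppd prh (\<lambda>_. 1) (\<lambda>_. 1)"
      unfolding ik_matching_def Let_def \<nu>_def[symmetric] ppd_def prh_def sld ..
    also have "\<dots> = {(p, r). p \<in> set ld \<and> r \<in> set lh \<and> gH r = gD p \<and> s2.posR r div 1 = s2.posP p div 1}"
      by (rule s2.final)
    also have "\<dots> = {(d, h). d \<in> D \<and> h \<in> H \<and> R (posi ld d) (posi lh h)}"
    proof -
      have "s2.posP d = posi ld d mod l" if "d \<in> set ld" for d
        unfolding s2.posP_alt unfolding gD_def by (rule posi_block[OF dld that l0])
      moreover have "s2.posR h = posi lh h mod k" if "h \<in> set lh" for h
        unfolding s2.posR_alt unfolding gH_def by (rule posi_block[OF dlh that k0])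
      ultimately show ?thesis using sld slh by (auto simp: R_def gD_def gH_def)
    qed
    finally show ?thesis .
  qed
  have f1: "j = j'" if "R i j" "R i j'" for i j j'
    using that unfolding R_def by (metis div_mult_mod_eq)
  have f2: "i = i'" if "R i j" "R i' j" for i i' j
    using that unfolding R_def by (metis div_mult_mod_eq)
  have "adequate D H prefD prefH (\<lambda>_. l) (\<lambda>_. k) \<longleftrightarrow>
    (\<forall>i<length ld. \<forall>j<length lh. \<not> ((\<forall>j'<length lh. R i j' \<longrightarrow> j < j') \<and>
                                      (\<forall>i'<length ld. R i' j \<longrightarrow> i < i')))"
    unfolding adequate_def M
    by (rule stable_char[OF dld sld dlh slh pD pH refl]) (use f1 f2 in blast)+
  also have "\<dots> \<longleftrightarrow> (l = k \<or> (min (length ld) (length lh) \<le> l \<and> min (length ld) (length lh) \<le> k))"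
    unfolding R_def by (rule arith_char[OF assms(6,7)])
  also have "length ld = card D" using distinct_card[OF dld] sld by simp
  also have "length lh = card H" using distinct_card[OF dlh] slh by simp
  finally show ?thesis .
qed

end
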